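(* Let $r \geq 2$, let $H$ be a digraph (possibly with loops), and let $D$ be an $H$-colored $r$-quasi-transitive digraph such that every directed cycle of length $r+1$ in $D$ is an $H$-cycle. For every $k \geq r$, $D$ has a $(k,H)$-kernel.
   Context: All digraphs are finite. A digraph $D$ is $r$-quasi-transitive if for all distinct $u,v\in V(D)$, whenever there is a directed $uv$-path of length $r$, $u$ and $v$ are joined by an arc (in some direction). $D$ has no loops and comes with a map $\rho: A(D)\to V(H)$. For a walk $W=(x_0,\ldots,x_n)$ in $D$, there is an obstruction on $x_i$ if $(\rho(x_{i-1},x_i),\rho(x_i,x_{i+1})) \notin A(H)$; for an open walk this is considered at internal vertices $x_i$, $1\le i\le n-1$, for a closed walk at all $i\in\{0,\ldots,n-1\}$ with indices modulo $n$. $O_H(W)$ is the set of indices with an obstruction; the $H$-length is $l_H(W)=|O_H(W)|+1$ for open $W$ and $|O_H(W)|$ for closed $W$. An $H$-cycle is a directed cycle with no obstructions. A $(k,H)$-kernel ($k\ge2$) is a set $S\subseteq V(D)$ such that for every two distinct $u,v\in S$ every directed $uv$-path in $D$ has $H$-length at least $k$, and for every $x\in V(D)\setminus S$ there is a directed path from $x$ to a vertex of $S$ of $H$-length at most $k-1$. *)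

theory Defs
  imports Main
begin

definition digraph :: "'a set \<Rightarrow> ('a \<times> 'a) set \<Rightarrow> bool" where
  "digraph V A \<longleftrightarrow> A \<subseteq> V \<times> V"

definition loopless :: "('a \<times> 'a) set \<Rightarrow> bool" where
  "loopless A \<longleftrightarrow> (\<forall>x. (x, x) \<notin> A)"

definition H_coloring :: "('a \<times> 'a) set \<Rightarrow> 'c set \<Rightarrow> ('a \<times> 'a \<Rightarrow> 'c) \<Rightarrow> bool" where
  "H_coloring A VH rho \<longleftrightarrow> (\<forall>e\<in>A. rho e \<in> VH)"

text \<open>A directed path, given by its vertex list (x_0,...,x_n): distinct vertices, consecutive arcs.
  Its length is n = length xs - 1.\<close>
definition dpath :: "'a set \<Rightarrow> ('a \<times> 'a) set \<Rightarrow> 'a list \<Rightarrow> bool" where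
  "dpath V A xs \<longleftrightarrow> xs \<noteq> [] \<and> distinct xs \<and> set xs \<subseteq> V \<and>
     (\<forall>i. Suc i < length xs \<longrightarrow> (xs ! i, xs ! Suc i) \<in> A)"

definition dpath_from_to :: "'a set \<Rightarrow> ('a \<times> 'a) set \<Rightarrow> 'a \<Rightarrow> 'a \<Rightarrow> 'a list \<Rightarrow> bool" where
  "dpath_from_to V A u v xs \<longleftrightarrow> dpath V A xs \<and> hd xs = u \<and> last xs = v"

definition r_quasi_transitive :: "nat \<Rightarrow> 'a set \<Rightarrow> ('a \<times> 'a) set \<Rightarrow> bool" where
  "r_quasi_transitive r V A \<longleftrightarrow>
     (\<forall>u\<in>V. \<forall>v\<in>V. u \<noteq> v \<longrightarrow>
        (\<exists>xs. dpath_from_to V A u v xs \<and> length xs = r + 1) \<longrightarrow>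
        (u, v) \<in> A \<or> (v, u) \<in> A)"

definition obstr_open :: "('c \<times> 'c) set \<Rightarrow> ('a \<times> 'a \<Rightarrow> 'c) \<Rightarrow> 'a list \<Rightarrow> nat set" where
  "obstr_open AH rho xs = {i. 1 \<le> i \<and> Suc i < length xs \<and>
      (rho (xs ! (i - 1), xs ! i), rho (xs ! i, xs ! Suc i)) \<notin> AH}"

definition H_length_open :: "('c \<times> 'c) set \<Rightarrow> ('a \<times> 'a \<Rightarrow> 'c) \<Rightarrow> 'a list \<Rightarrow> nat" where
  "H_length_open AH rho xs = card (obstr_open AH rho xs) + 1"

text \<open>A directed cycle (x_0,...,x_{n-1},x_0), given by the list of its n distinct vertices;
  arcs x_i -> x_{(i+1) mod n}; its length is n.\<close>
definition dcycle :: "'a set \<Rightarrow> ('a \<times> 'a) set \<Rightarrow> 'a list \<Rightarrow> bool" where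
  "dcycle V A xs \<longleftrightarrow> length xs \<ge> 2 \<and> distinct xs \<and> set xs \<subseteq> V \<and>
     (\<forall>i < length xs. (xs ! i, xs ! ((i + 1) mod length xs)) \<in> A)"

definition obstr_closed :: "('c \<times> 'c) set \<Rightarrow> ('a \<times> 'a \<Rightarrow> 'c) \<Rightarrow> 'a list \<Rightarrow> nat set" where
  "obstr_closed AH rho xs = (let n = length xs in {i. i < n \<and>
      (rho (xs ! ((i + n - 1) mod n), xs ! i), rho (xs ! i, xs ! ((i + 1) mod n))) \<notin> AH})"

definition H_cycle :: "'a set \<Rightarrow> ('a \<times> 'a) set \<Rightarrow> ('c \<times> 'c) set \<Rightarrow> ('a \<times> 'a \<Rightarrow> 'c) \<Rightarrow> 'a list \<Rightarrow> bool" where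
  "H_cycle V A AH rho xs \<longleftrightarrow> dcycle V A xs \<and> obstr_closed AH rho xs = {}"

definition kH_kernel :: "nat \<Rightarrow> 'a set \<Rightarrow> ('a \<times> 'a) set \<Rightarrow> ('c \<times> 'c) set \<Rightarrow> ('a \<times> 'a \<Rightarrow> 'c) \<Rightarrow> 'a set \<Rightarrow> bool" where
  "kH_kernel k V A AH rho S \<longleftrightarrow> S \<subseteq> V \<and>
     (\<forall>u\<in>S. \<forall>v\<in>S. u \<noteq> v \<longrightarrow>
        (\<forall>xs. dpath_from_to V A u v xs \<longrightarrow> H_length_open AH rho xs \<ge> k)) \<and>
     (\<forall>x\<in>V - S. \<exists>v\<in>S. \<exists>xs. dpath_from_to V A x v xs \<and> H_length_open AH rho xs \<le> k - 1)"

end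

theory Submission imports Defs begin
lemma kernel_trans:
  assumes "finite V" "trans T"
  shows "\<exists>S\<subseteq>V. (\<forall>u\<in>S. \<forall>v\<in>S. u \<noteq> v \<longrightarrow> (u,v) \<notin> T) \<and> (\<forall>x\<in>V-S. \<exists>v\<in>S. (x,v) \<in> T)"
  using assms(1)
proof (induction V rule: finite_psubset_induct)
  case (psubset V)
  show ?case
  proof (cases "V = {}")
    case True then show ?thesis by auto
  next
    case False
    define f where "f v = card {z\<in>V. z = v \<or> (v,z)\<in>T}" for v
    obtain v0 where "v0 \<in> V" using False by blast
    obtain v where v: "v\<in>V" and vmin: "\<And>w. w\<in>V \<Longrightarrow> f v \<le> f w"
      using ex_has_least_nat[of "\<lambda>x. x\<in>V" v0 f] \<open>v0 \<in> V\<close> by blast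
    have key: "(z,v)\<in>T" if zV: "z\<in>V" and vz: "(v,z)\<in>T" for z
    proof (rule ccontr)
      assume nz: "(z,v)\<notin>T"
      have s1: "{y\<in>V. y = z \<or> (z,y)\<in>T} \<subseteq> {y\<in>V. y = v \<or> (v,y)\<in>T}"
      proof
        fix y assume "y \<in> {y\<in>V. y = z \<or> (z,y)\<in>T}"
        then show "y \<in> {y\<in>V. y = v \<or> (v,y)\<in>T}"
          using vz transD[OF assms(2), of v z y] by blast
      qed
      have s2: "v \<notin> {y\<in>V. y = z \<or> (z,y)\<in>T}" using nz vz by auto
      have sub: "{y\<in>V. y = z \<or> (z,y)\<in>T} \<subset> {y\<in>V. y = v \<or> (v,y)\<in>T}"
        using s1 s2 v by blast
      have "f z < f v" unfolding f_def
        by (rule psubset_card_mono[OF _ sub]) (use psubset.hyps(1) in simp)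
      moreover have "f v \<le> f z" using vmin zV .
      ultimately show False by simp
    qed
    define V' where "V' = V - {v} - {x. (x,v)\<in>T}"
    have "V' \<subset> V" using v unfolding V'_def by auto
    then have "\<exists>S\<subseteq>V'. (\<forall>u\<in>S. \<forall>w\<in>S. u \<noteq> w \<longrightarrow> (u,w) \<notin> T) \<and> (\<forall>x\<in>V'-S. \<exists>w\<in>S. (x,w) \<in> T)"
      by (rule psubset.IH)
    then obtain S' where S'1: "S'\<subseteq>V'" and S'2a: "\<forall>u\<in>S'. \<forall>w\<in>S'. u \<noteq> w \<longrightarrow> (u,w) \<notin> T"
      and S'3a: "\<forall>x\<in>V'-S'. \<exists>w\<in>S'. (x,w) \<in> T"
      by (elim exE conjE) 
    have S'2: "(u,w) \<notin> T" if "u\<in>S'" "w\<in>S'" "u \<noteq> w" for u w using S'2a that by simp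
    have S'3: "\<exists>w\<in>S'. (x,w) \<in> T" if "x\<in>V'-S'" for x using S'3a that by simp
    show ?thesis
    proof (rule exI[of _ "insert v S'"], intro conjI ballI impI)
      show "insert v S' \<subseteq> V" using S'1 v unfolding V'_def by blast
    next
      fix u w assume u: "u \<in> insert v S'" and w: "w \<in> insert v S'" and uw: "u \<noteq> w"
      show "(u,w) \<notin> T"
      proof (cases "u = v")
        case True
        then have "w \<in> S'" using w uw by blast
        then have "w \<in> V" "(w,v) \<notin> T" using S'1 unfolding V'_def by blast+
        then show ?thesis using key True by blast
      next
        case False
        then have uS: "u \<in> S'" using u by blast
        then have "(u,v) \<notin> T" using S'1 unfolding V'_def by blast
        then show ?thesis using S'2[OF uS _ uw] w by blast
      qed
    next
      fix x assume x: "x \<in> V - insert v S'"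
      show "\<exists>w\<in>insert v S'. (x,w) \<in> T"
      proof (cases "(x,v) \<in> T")
        case True then show ?thesis by blast
      next
        case False
        then have "x \<in> V' - S'" using x unfolding V'_def by blast
        then show ?thesis using S'3 by blast
      qed
    qed
  qed
qed

definition walk :: "('a \<times> 'a) set \<Rightarrow> 'a list \<Rightarrow> bool" where
  "walk A xs \<longleftrightarrow> xs \<noteq> [] \<and> (\<forall>i. Suc i < length xs \<longrightarrow> (xs!i, xs!Suc i) \<in> A)"

lemma trancl_walk:
  assumes "(u,v) \<in> A\<^sup>+"
  shows "\<exists>xs. walk A xs \<and> hd xs = u \<and> last xs = v \<and> length xs \<ge> 2"
  using assms
proof (induction rule: trancl_induct)
  case (base y)
  then show ?case
    by (intro exI[of _ "[u,y]"]) (auto simp: walk_def less_Suc_eq)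
next
  case (step y z)
  then obtain xs where xs: "walk A xs" "hd xs = u" "last xs = y" "length xs \<ge> 2" by blast
  have "walk A (xs @ [z])"
    unfolding walk_def
  proof (intro conjI allI impI)
    fix i assume i: "Suc i < length (xs @ [z])"
    show "((xs @ [z]) ! i, (xs @ [z]) ! Suc i) \<in> A"
    proof (cases "Suc i < length xs")
      case True then show ?thesis using xs(1) by (auto simp: walk_def nth_append)
    next
      case False
      then have "i = length xs - 1" using i by simp
      then show ?thesis using xs step(2) by (auto simp: nth_append last_conv_nth walk_def)
    qed
  qed simp
  moreover have "hd (xs @ [z]) = hd xs" using xs(4) by (cases xs) auto
  ultimately show ?case using xs by (intro exI[of _ "xs @ [z]"]) auto
qed

lemma walk_trancl:
  assumes "\<forall>i. Suc i < length xs \<longrightarrow> (xs!i, xs!Suc i) \<in> A"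
  shows "0 < j \<Longrightarrow> j < length xs \<Longrightarrow> (xs!0, xs!j) \<in> A\<^sup>+"
proof (induction j)
  case 0 then show ?case by simp
next
  case (Suc j)
  show ?case
  proof (cases "j = 0")
    case True then show ?thesis using assms Suc by auto
  next
    case False
    then have "(xs!0, xs!j) \<in> A\<^sup>+" using Suc by auto
    moreover have "(xs!j, xs!Suc j) \<in> A" using assms Suc by auto
    ultimately show ?thesis by auto
  qed
qed

lemma dpath_trancl:
  assumes "dpath_from_to V A u v xs" "u \<noteq> v"
  shows "(u,v) \<in> A\<^sup>+"
proof -
  have ne: "xs \<noteq> []" and ar: "\<forall>i. Suc i < length xs \<longrightarrow> (xs!i, xs!Suc i) \<in> A"
    using assms(1) by (auto simp: dpath_from_to_def dpath_def)
  have "length xs \<noteq> 1"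
  proof
    assume "length xs = 1"
    then obtain a where "xs = [a]" by (cases xs) auto
    then show False using assms by (auto simp: dpath_from_to_def)
  qed
  then have "0 < length xs - 1" "length xs - 1 < length xs" using ne by (cases xs; auto)+
  from walk_trancl[OF ar this] show ?thesis
    using assms(1) ne by (auto simp: dpath_from_to_def hd_conv_nth last_conv_nth)
qed

lemma walk_chord:
  assumes "walk A xs" "i < j" "j < length xs" "(xs!i, xs!j) \<in> A"
  shows "walk A (take (Suc i) xs @ drop j xs) \<and> hd (take (Suc i) xs @ drop j xs) = hd xs
    \<and> last (take (Suc i) xs @ drop j xs) = last xs
    \<and> length (take (Suc i) xs @ drop j xs) = length xs + Suc i - j"
proof (intro conjI)
  let ?ys = "take (Suc i) xs @ drop j xs"
  show "walk A ?ys" unfolding walk_def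
  proof (intro conjI allI impI)
    show "?ys \<noteq> []" using assms by simp
    fix t assume t: "Suc t < length ?ys"
    consider "t < i" | "t = i" | "t > i" by linarith
    then show "(?ys!t, ?ys!Suc t) \<in> A"
    proof cases
      case 1 then show ?thesis using assms t by (auto simp: nth_append walk_def min_def)
    next
      case 2 then show ?thesis using assms t by (auto simp: nth_append walk_def min_def)
    next
      case 3
      then obtain d where d: "t = Suc i + d" using less_iff_Suc_add by blast
      have "?ys!t = xs!(t - Suc i + j)" "?ys!Suc t = xs!Suc (t - Suc i + j)"
        using assms t unfolding d by (auto simp: nth_append min_def add.commute)
      moreover have "Suc (t - Suc i + j) < length xs" using assms t 3 by (auto simp: min_def)
      ultimately show ?thesis using assms(1) by (auto simp: walk_def)
    qed
  qed
  show "hd ?ys = hd xs" using assms by (cases xs) (auto simp: walk_def)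
  show "last ?ys = last xs" using assms by auto
  show "length ?ys = length xs + Suc i - j" using assms by auto
qed

lemma walk_loop:
  assumes "walk A xs" "i < j" "j < length xs" "xs!i = xs!j"
  shows "walk A (take (Suc i) xs @ drop (Suc j) xs) \<and> hd (take (Suc i) xs @ drop (Suc j) xs) = hd xs
    \<and> last (take (Suc i) xs @ drop (Suc j) xs) = last xs
    \<and> length (take (Suc i) xs @ drop (Suc j) xs) < length xs"
proof (intro conjI)
  let ?ys = "take (Suc i) xs @ drop (Suc j) xs"
  show "walk A ?ys" unfolding walk_def
  proof (intro conjI allI impI)
    show "?ys \<noteq> []" using assms by (simp add: walk_def)
    fix t assume t: "Suc t < length ?ys"
    consider "t < i" | "t = i" | "t > i" by linarith
    then show "(?ys!t, ?ys!Suc t) \<in> A"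
    proof cases
      case 1 then show ?thesis using assms t by (auto simp: nth_append walk_def min_def)
    next
      case 2 then show ?thesis using assms t by (auto simp: nth_append walk_def min_def)
    next
      case 3
      then obtain d where d: "t = Suc i + d" using less_iff_Suc_add by blast
      have "?ys!t = xs!(t - Suc i + Suc j)" "?ys!Suc t = xs!Suc (t - Suc i + Suc j)"
        using assms t unfolding d by (auto simp: nth_append min_def add.commute)
      moreover have "Suc (t - Suc i + Suc j) < length xs" using assms t 3 by (auto simp: min_def)
      ultimately show ?thesis using assms(1) by (auto simp: walk_def)
    qed
  qed
  show "hd ?ys = hd xs" using assms by (cases xs) (auto simp: walk_def)
  show "last ?ys = last xs"
  proof (cases "Suc j = length xs")
    case True
    then have "?ys = take (Suc i) xs" by simp
    have "take (Suc i) xs \<noteq> []" "length (take (Suc i) xs) = Suc i" using assms by auto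
    then have "last (take (Suc i) xs) = xs ! i" by (simp add: last_conv_nth)
    moreover have "last xs = xs ! j" using assms True
      by (simp add: last_conv_nth walk_def del: One_nat_def) (metis diff_Suc_1)
    ultimately show ?thesis using assms \<open>?ys = _\<close> by simp
  next
    case False then show ?thesis using assms by auto
  qed
  show "length ?ys < length xs" using assms by auto
qed

lemma shortest_path:
  assumes r2: "r \<ge> 2" and dg: "digraph V A"
    and rqt: "r_quasi_transitive r V A"
    and cyc: "\<forall>xs. dcycle V A xs \<and> length xs = r + 1 \<longrightarrow> H_cycle V A AH rho xs"
    and uv: "(u,v) \<in> A\<^sup>+" and neq: "u \<noteq> v"
  shows "\<exists>xs. dpath_from_to V A u v xs \<and> H_length_open AH rho xs \<le> r - 1"
proof -
  let ?P = "\<lambda>ys. walk A ys \<and> hd ys = u \<and> last ys = v"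
  obtain xs0 where "?P xs0" using trancl_walk[OF uv] by blast
  then obtain xs where P: "?P xs" and minl: "\<And>ys. ?P ys \<Longrightarrow> length xs \<le> length ys"
    using ex_has_least_nat[of ?P xs0 length] by blast
  have wk: "walk A xs" and hd: "hd xs = u" and lst: "last xs = v" using P by auto
  have ne: "xs \<noteq> []" using wk by (simp add: walk_def)
  have arc: "(xs!i, xs!Suc i) \<in> A" if "Suc i < length xs" for i
    using wk that by (simp add: walk_def)
  have len2: "length xs \<ge> 2"
  proof (rule ccontr)
    assume "\<not> length xs \<ge> 2"
    then have "length xs < 2" by simp
    then obtain a where "xs = [a]" using ne
      by (cases xs; cases "tl xs") auto
    then show False using hd lst neq by simp
  qed
  have nochord: "j = Suc i" if "i < j" "j < length xs" "(xs!i, xs!j) \<in> A" for i j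
  proof (rule ccontr)
    assume "j \<noteq> Suc i"
    with that have "j > Suc i" by simp
    from walk_chord[OF wk that] have "?P (take (Suc i) xs @ drop j xs)"
      "length (take (Suc i) xs @ drop j xs) = length xs + Suc i - j" using hd lst by auto
    with minl[of "take (Suc i) xs @ drop j xs"] \<open>j > Suc i\<close> \<open>j < length xs\<close> show False by simp
  qed
  have neqij: "xs!i \<noteq> xs!j" if "i < j" "j < length xs" for i j
  proof
    assume "xs!i = xs!j"
    from walk_loop[OF wk that this] have "?P (take (Suc i) xs @ drop (Suc j) xs)"
      "length (take (Suc i) xs @ drop (Suc j) xs) < length xs" using hd lst by auto
    with minl[of "take (Suc i) xs @ drop (Suc j) xs"] show False by simp
  qed
  have dist: "distinct xs"
    unfolding distinct_conv_nth
  proof (intro allI impI)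
    fix i j assume "i < length xs" "j < length xs" "i \<noteq> j"
    then show "xs!i \<noteq> xs!j" using neqij[of i j] neqij[of j i] by (cases "i < j") auto
  qed
  have AV: "A \<subseteq> V \<times> V" using dg by (simp add: digraph_def)
  have inV: "xs!i \<in> V" if "i < length xs" for i
  proof (cases "Suc i < length xs")
    case True then show ?thesis using arc[OF True] AV by blast
  next
    case False
    then have "Suc (i - 1) < length xs" "Suc (i - 1) = i" using that len2 by auto
    then show ?thesis using arc[of "i - 1"] AV by force
  qed
  have setV: "set xs \<subseteq> V" using inV by (auto simp: in_set_conv_nth)
  have dp: "dpath_from_to V A u v xs"
    unfolding dpath_from_to_def dpath_def using ne dist setV arc hd lst by blast
  have fin: "finite (obstr_open AH rho xs)"
    by (rule finite_subset[of _ "{..<length xs}"]) (auto simp: obstr_open_def)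
  have "card (obstr_open AH rho xs) \<le> r - 2"
  proof (cases "length xs \<le> r")
    case True
    have "obstr_open AH rho xs \<subseteq> {1..<length xs - 1}" by (auto simp: obstr_open_def)
    then have "card (obstr_open AH rho xs) \<le> card {1..<length xs - 1}"
      by (intro card_mono) auto
    then show ?thesis using True by simp
  next
    case False
    let ?L = "length xs"
    have "obstr_open AH rho xs = {}"
    proof (rule ccontr)
      assume "obstr_open AH rho xs \<noteq> {}"
      then obtain m where m: "m \<in> obstr_open AH rho xs" by blast
      then have m1: "1 \<le> m" and m2: "Suc m < ?L"
        and bad: "(rho (xs ! (m - 1), xs ! m), rho (xs ! m, xs ! Suc m)) \<notin> AH"
        by (auto simp: obstr_open_def)
      define i where "i = min (m - 1) (?L - 1 - r)"
      have i1: "i < m" "m + 1 \<le> i + r" "i + r < ?L" using m1 m2 False r2 unfolding i_def by auto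
      define c where "c = take (Suc r) (drop i xs)"
      have lc: "length c = Suc r" using i1 unfolding c_def by simp
      have cn: "c!t = xs!(i+t)" if "t \<le> r" for t using that i1 unfolding c_def by simp
      have cne: "c \<noteq> []" using lc by auto
      have cdist: "distinct c" unfolding c_def using dist by simp
      have cset: "set c \<subseteq> V" unfolding c_def using setV
        by (meson dual_order.trans set_drop_subset set_take_subset)
      have carc: "(c!t, c!Suc t) \<in> A" if "Suc t < length c" for t
        using that lc cn arc[of "i + t"] i1 by simp
      have "hd c = xs!i" using cn[of 0] cne by (simp add: hd_conv_nth)
      moreover have "last c = xs!(i+r)" using cn[of r] cne lc by (simp add: last_conv_nth)
      ultimately have "dpath_from_to V A (xs!i) (xs!(i+r)) c"
        unfolding dpath_from_to_def dpath_def using cne cdist cset carc by blast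
      moreover have "xs!i \<noteq> xs!(i+r)" using neqij[of i "i+r"] i1 r2 by simp
      moreover have "xs!i \<in> V" "xs!(i+r) \<in> V" using inV i1 by auto
      ultimately have "(xs!i, xs!(i+r)) \<in> A \<or> (xs!(i+r), xs!i) \<in> A"
        using rqt lc unfolding r_quasi_transitive_def
        by (metis Suc_eq_plus1)
      moreover have "(xs!i, xs!(i+r)) \<notin> A" using nochord[of i "i+r"] i1 r2 by auto
      ultimately have bck: "(xs!(i+r), xs!i) \<in> A" by blast
      have "dcycle V A c" unfolding dcycle_def
      proof (intro conjI allI impI)
        show "2 \<le> length c" using lc r2 by simp
        show "distinct c" by (rule cdist)
        show "set c \<subseteq> V" by (rule cset)
        fix t assume t: "t < length c"
        show "(c ! t, c ! ((t + 1) mod length c)) \<in> A"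
        proof (cases "t = r")
          case True then show ?thesis using bck lc cn[of 0] cn[of r] by simp
        next
          case False
          then have "Suc t < length c" using t lc by simp
          then show ?thesis using carc[of t] lc by simp
        qed
      qed
      then have "H_cycle V A AH rho c" using cyc lc by simp
      then have oc: "obstr_closed AH rho c = {}" by (simp add: H_cycle_def)
      define t where "t = m - i"
      have t1: "1 \<le> t" "t + 1 \<le> r" using i1 unfolding t_def by auto
      have e1: "(t + Suc r - 1) mod Suc r = t - 1"
      proof -
        have "t + Suc r - 1 = (t - 1) + Suc r" using t1 by simp
        moreover have "((t - 1) + Suc r) mod Suc r = (t - 1) mod Suc r" by (rule mod_add_self2)
        moreover have "(t - 1) mod Suc r = t - 1" using t1 by (intro mod_less) simp
        ultimately show ?thesis by presburger
      qed
      have e2: "(t + 1) mod Suc r = t + 1" using t1 by simp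
      have "t \<notin> obstr_closed AH rho c" using oc by simp
      then have "(rho (c ! (t - 1), c ! t), rho (c ! t, c ! (t + 1))) \<in> AH"
        using t1 lc e1 e2 by (simp add: obstr_closed_def Let_def)
      moreover have "c ! (t - 1) = xs ! (m - 1)" "c ! t = xs ! m" "c ! (t + 1) = xs ! Suc m"
        using cn[of "t - 1"] cn[of t] cn[of "t+1"] t1 i1 unfolding t_def by auto
      ultimately show False using bad by simp
    qed
    then show ?thesis by simp
  qed
  then have "H_length_open AH rho xs \<le> r - 1" using r2 by (simp add: H_length_open_def)
  with dp show ?thesis by blast
qed
theorem theorem22:
  fixes r k :: nat and V :: "'a set" and A :: "('a \<times> 'a) set"
    and VH :: "'c set" and AH :: "('c \<times> 'c) set" and rho :: "'a \<times> 'a \<Rightarrow> 'c"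
  assumes "r \<ge> 2"
    and "finite V" and "digraph V A" and "loopless A"
    and "finite VH" and "digraph VH AH"
    and "H_coloring A VH rho"
    and "r_quasi_transitive r V A"
    and "\<forall>xs. dcycle V A xs \<and> length xs = r + 1 \<longrightarrow> H_cycle V A AH rho xs"
    and "k \<ge> r"
  shows "\<exists>S. kH_kernel k V A AH rho S"
proof -
  obtain S where S1: "S \<subseteq> V" and S2: "\<forall>u\<in>S. \<forall>v\<in>S. u \<noteq> v \<longrightarrow> (u,v) \<notin> A\<^sup>+"
    and S3: "\<forall>x\<in>V-S. \<exists>v\<in>S. (x,v) \<in> A\<^sup>+"
    using kernel_trans[OF assms(2) trans_trancl[of A]] by (elim exE conjE)
  have "kH_kernel k V A AH rho S"
    unfolding kH_kernel_def
  proof (intro conjI ballI allI impI)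
    show "S \<subseteq> V" by (rule S1)
  next
    fix u v xs assume u: "u \<in> S" and v: "v \<in> S" and uv: "u \<noteq> v"
      and p: "dpath_from_to V A u v xs"
    have "(u,v) \<in> A\<^sup>+" by (rule dpath_trancl[OF p uv])
    with S2 u v uv show "k \<le> H_length_open AH rho xs" by blast
  next
    fix x assume x: "x \<in> V - S"
    then obtain v where v: "v \<in> S" and xv: "(x,v) \<in> A\<^sup>+" using S3 by blast
    have "x \<noteq> v" using x v by blast
    from shortest_path[OF assms(1,3,8,9) xv this] obtain xs where
      "dpath_from_to V A x v xs" "H_length_open AH rho xs \<le> r - 1" by blast
    then show "\<exists>v\<in>S. \<exists>xs. dpath_from_to V A x v xs \<and> H_length_open AH rho xs \<le> k - 1"
      using v assms(10) by force
  qed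
  then show ?thesis by blast
qed
end
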